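(* For each $k\in\mathbb{N}$ let $f_{n,k}$ be the number of forkless monomials $\mathfrak{m}\in\mathfrak{M}$ of total degree $k$. Then, as formal power series in $\mathbb{Z}[[t]]$, $$\sum_{k\in\mathbb{N}}f_{n,k}t^k=\frac{(1+0t)(1+1t)\cdots(1+(n-2)t)}{(1-t)^{n-1}}.$$
   Context: Let $n$ be a positive integer and $\mathbb{N}=\{0,1,2,\dots\}$. Let $\mathfrak{M}$ be the set of monomials in the indeterminates $x_{i,j}$, $1\le i<j\le n$. A monomial $\mathfrak{m}\in\mathfrak{M}$ is forkless if there is no triple $1\le i<j<k\le n$ with $x_{i,j}x_{i,k}\mid\mathfrak{m}$. *)

theory Defs
  imports "HOL-Computational_Algebra.Formal_Power_Series"
begin

text \<open>Indeterminates x_{i,j}, 1 <= i < j <= n, indexed by the pair (i,j).\<close>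
definition var_index :: "nat \<Rightarrow> (nat \<times> nat) set" where
  "var_index n = {(i, j). 1 \<le> i \<and> i < j \<and> j \<le> n}"

text \<open>A monomial in these indeterminates is its exponent vector: a function
  nat \<times> nat \<Rightarrow> nat vanishing outside the index set.\<close>
definition monomials :: "nat \<Rightarrow> (nat \<times> nat \<Rightarrow> nat) set" where
  "monomials n = {e. \<forall>p. p \<notin> var_index n \<longrightarrow> e p = 0}"

definition total_degree :: "nat \<Rightarrow> (nat \<times> nat \<Rightarrow> nat) \<Rightarrow> nat" where
  "total_degree n e = (\<Sum>p\<in>var_index n. e p)"

definition forkless :: "nat \<Rightarrow> (nat \<times> nat \<Rightarrow> nat) \<Rightarrow> bool" where
  "forkless n e \<longleftrightarrow> \<not> (\<exists>i j k. 1 \<le> i \<and> i < j \<and> j < k \<and> k \<le> n \<and>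
       e (i, j) \<ge> 1 \<and> e (i, k) \<ge> 1)"

definition f_count :: "nat \<Rightarrow> nat \<Rightarrow> nat" where
  "f_count n k = card {e \<in> monomials n. forkless n e \<and> total_degree n e = k}"

end

theory Submission
  imports Defs "HOL-Library.FuncSet"
begin

definition Bx :: "nat \<Rightarrow> (nat \<times> nat) set" where "Bx n = {..n} \<times> {..n}"
definition Dg :: "nat \<Rightarrow> (nat \<times> nat \<Rightarrow> nat) \<Rightarrow> nat" where "Dg n e = sum e (Bx n)"
definition MI :: "nat \<Rightarrow> nat set \<Rightarrow> (nat \<times> nat \<Rightarrow> nat) set" where
  "MI n I = {e. (\<forall>p. e p \<noteq> 0 \<longrightarrow> fst p \<in> I \<and> fst p < snd p \<and> snd p \<le> n) \<and>
     (\<forall>i j k. j \<noteq> k \<longrightarrow> e (i,j) \<noteq> 0 \<longrightarrow> e (i,k) \<noteq> 0 \<longrightarrow> False)}"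
definition SI :: "nat \<Rightarrow> nat set \<Rightarrow> nat \<Rightarrow> (nat \<times> nat \<Rightarrow> nat) set" where
  "SI n I k = {e \<in> MI n I. Dg n e = k}"
definition CI :: "nat \<Rightarrow> nat set \<Rightarrow> nat \<Rightarrow> nat" where "CI n I k = card (SI n I k)"

lemma finite_Bx: "finite (Bx n)" by (simp add: Bx_def)

lemma finite_bounded_funs:
  assumes "finite B"
  shows "finite {e :: 'a \<Rightarrow> nat. \<forall>p. (p \<notin> B \<longrightarrow> e p = 0) \<and> e p \<le> k}"
proof -
  have "{e :: 'a \<Rightarrow> nat. \<forall>p. (p \<notin> B \<longrightarrow> e p = 0) \<and> e p \<le> k}
        \<subseteq> (\<lambda>f p. if p \<in> B then f p else 0) ` (PiE B (\<lambda>_. {..k}))"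
  proof
    fix e :: "'a \<Rightarrow> nat" assume e: "e \<in> {e. \<forall>p. (p \<notin> B \<longrightarrow> e p = 0) \<and> e p \<le> k}"
    have "e = (\<lambda>p. if p \<in> B then restrict e B p else 0)" using e by (auto simp: fun_eq_iff)
    moreover have "restrict e B \<in> PiE B (\<lambda>_. {..k})" using e by auto
    ultimately show "e \<in> (\<lambda>f p. if p \<in> B then f p else 0) ` (PiE B (\<lambda>_. {..k}))" by blast
  qed
  moreover have "finite (PiE B (\<lambda>_. {..k}))" using assms by (simp add: finite_PiE)
  ultimately show ?thesis by (meson finite_imageI finite_subset)
qed

lemma SI_supp: "e \<in> SI n I k \<Longrightarrow> e p \<noteq> 0 \<Longrightarrow> fst p \<in> I \<and> fst p < snd p \<and> snd p \<le> n"
  unfolding SI_def MI_def by blast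

lemma SI_Bx: "e \<in> SI n I k \<Longrightarrow> p \<notin> Bx n \<Longrightarrow> e p = 0"
proof (rule ccontr)
  assume "e \<in> SI n I k" "p \<notin> Bx n" "e p \<noteq> 0"
  then have "fst p < snd p" "snd p \<le> n" using SI_supp by blast+
  then have "p \<in> Bx n" unfolding Bx_def by (cases p) auto
  then show False using \<open>p \<notin> Bx n\<close> by blast
qed

lemma finite_SI: "finite (SI n I k)"
proof -
  have "SI n I k \<subseteq> {e. \<forall>p. (p \<notin> Bx n \<longrightarrow> e p = 0) \<and> e p \<le> k}"
  proof (rule subsetI, rule CollectI, rule allI, rule conjI, rule impI)
    fix e p assume e: "e \<in> SI n I k"
    show "p \<notin> Bx n \<Longrightarrow> e p = 0" using e by (rule SI_Bx)
    show "e p \<le> k"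
    proof (cases "p \<in> Bx n")
      case True
      then have "e p \<le> sum e (Bx n)" by (intro member_le_sum) (auto simp: finite_Bx)
      then show ?thesis using e by (simp add: SI_def Dg_def)
    next
      case False then show ?thesis using SI_Bx[OF e] by simp
    qed
  qed
  then show ?thesis using finite_bounded_funs[OF finite_Bx] by (rule finite_subset)
qed

lemma Dg_upd:
  assumes "x \<in> Bx n" "e x = 0"
  shows "Dg n (e(x := a)) = Dg n e + a"
proof -
  have "Dg n (e(x := a)) = a + sum (e(x:=a)) (Bx n - {x})"
    unfolding Dg_def using assms by (subst sum.remove[OF finite_Bx]) auto
  also have "sum (e(x:=a)) (Bx n - {x}) = sum e (Bx n - {x})" by (rule sum.cong) auto
  also have "\<dots> = Dg n e" unfolding Dg_def using assms sum.remove[OF finite_Bx assms(1), of e] by simp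
  finally show ?thesis by (simp only: add.commute)
qed

lemma MI_rowzero: "e \<in> MI n I \<Longrightarrow> i \<notin> I \<Longrightarrow> e (i,j) = 0"
proof (rule ccontr)
  assume "e \<in> MI n I" "i \<notin> I" "e (i,j) \<noteq> 0"
  then have "fst (i,j) \<in> I" unfolding MI_def by blast
  then show False using \<open>i \<notin> I\<close> by simp
qed

definition Aq :: "nat \<Rightarrow> nat set \<Rightarrow> nat \<Rightarrow> nat \<Rightarrow> nat \<times> nat \<Rightarrow> (nat \<times> nat \<Rightarrow> nat) set" where
  "Aq n I k i q = (\<lambda>e. e((i, fst q) := k - snd q)) ` SI n I (snd q)"

lemma SI_insert:
  assumes "i \<notin> I"
  shows "SI n (insert i I) k = SI n I k \<union> (\<Union>q \<in> {i<..n} \<times> {..<k}. Aq n I k i q)"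
proof (rule set_eqI, rule iffI)
  fix e assume e: "e \<in> SI n (insert i I) k"
  then have eM: "e \<in> MI n (insert i I)" and eD: "Dg n e = k" by (auto simp: SI_def)
  have sup: "\<And>p. e p \<noteq> 0 \<Longrightarrow> fst p \<in> insert i I \<and> fst p < snd p \<and> snd p \<le> n"
    using eM unfolding MI_def by blast
  have fk: "\<And>a j j'. j \<noteq> j' \<Longrightarrow> e (a,j) \<noteq> 0 \<Longrightarrow> e (a,j') \<noteq> 0 \<Longrightarrow> False"
    using eM unfolding MI_def by blast
  show "e \<in> SI n I k \<union> (\<Union>q \<in> {i<..n} \<times> {..<k}. Aq n I k i q)"
  proof (cases "\<forall>j. e (i,j) = 0")
    case True
    have "\<And>p. e p \<noteq> 0 \<Longrightarrow> fst p \<in> I \<and> fst p < snd p \<and> snd p \<le> n"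
    proof -
      fix p assume "e p \<noteq> 0"
      moreover have "fst p \<noteq> i"
      proof
        assume "fst p = i"
        then have "p = (i, snd p)" by (cases p) auto
        moreover have "e (i, snd p) = 0" using True by blast
        ultimately show False using \<open>e p \<noteq> 0\<close> by simp
      qed
      ultimately show "fst p \<in> I \<and> fst p < snd p \<and> snd p \<le> n" using sup by blast
    qed
    then have "e \<in> MI n I" using fk unfolding MI_def by blast
    then show ?thesis using eD by (simp add: SI_def)
  next
    case False
    then obtain j where ej: "e (i,j) \<noteq> 0" by blast
    have ij: "i < j" "j \<le> n" using sup[OF ej] by auto
    define e' where "e' = e((i,j) := 0)"
    have "\<And>p. e' p \<noteq> 0 \<Longrightarrow> fst p \<in> I \<and> fst p < snd p \<and> snd p \<le> n"
    proof -
      fix p assume ne: "e' p \<noteq> 0"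
      then have pne: "p \<noteq> (i,j)" and ep: "e p \<noteq> 0" unfolding e'_def by (auto split: if_splits)
      have "fst p \<noteq> i"
      proof
        assume "fst p = i"
        then have pp: "p = (i, snd p)" by (cases p) auto
        then have "snd p \<noteq> j" using pne by auto
        moreover have "e (i, snd p) \<noteq> 0" using ep pp by simp
        ultimately show False using fk[of "snd p" j i] ej by blast
      qed
      then show "fst p \<in> I \<and> fst p < snd p \<and> snd p \<le> n" using sup[OF ep] by blast
    qed
    moreover have "\<And>a j1 j2. j1 \<noteq> j2 \<Longrightarrow> e' (a,j1) \<noteq> 0 \<Longrightarrow> e' (a,j2) \<noteq> 0 \<Longrightarrow> False"
    proof -
      fix a j1 j2 assume "j1 \<noteq> j2" "e' (a,j1) \<noteq> 0" "e' (a,j2) \<noteq> 0"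
      then have "e (a,j1) \<noteq> 0" "e (a,j2) \<noteq> 0" unfolding e'_def by (auto split: if_splits)
      then show False using fk \<open>j1 \<noteq> j2\<close> by blast
    qed
    ultimately have e'M: "e' \<in> MI n I" unfolding MI_def by blast
    have ijB: "(i,j) \<in> Bx n" using ij unfolding Bx_def by auto
    have ee: "e = e'((i,j) := e (i,j))" unfolding e'_def by simp
    have "Dg n e = Dg n e' + e (i,j)"
      using Dg_upd[OF ijB, of e' "e (i,j)"] ee by (simp add: e'_def)
    then have m: "Dg n e' < k" "k - Dg n e' = e (i,j)" using eD ej by auto
    have "e' \<in> SI n I (Dg n e')" using e'M by (simp add: SI_def)
    then have "e'((i, j) := k - Dg n e') \<in> Aq n I k i (j, Dg n e')" unfolding Aq_def
      using image_eqI[of "e'((i, j) := k - Dg n e')" "\<lambda>e. e((i, j) := k - Dg n e')" e' "SI n I (Dg n e')"] by simp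
    then have "e \<in> Aq n I k i (j, Dg n e')" using m(2) ee by simp
    moreover have "(j, Dg n e') \<in> {i<..n} \<times> {..<k}" using ij m by auto
    ultimately show ?thesis by blast
  qed
next
  fix e assume "e \<in> SI n I k \<union> (\<Union>q \<in> {i<..n} \<times> {..<k}. Aq n I k i q)"
  then show "e \<in> SI n (insert i I) k"
  proof
    assume "e \<in> SI n I k"
    then show ?thesis unfolding SI_def MI_def by blast
  next
    assume "e \<in> (\<Union>q \<in> {i<..n} \<times> {..<k}. Aq n I k i q)"
    then obtain j m e' where jm: "i < j" "j \<le> n" "m < k" and e': "e' \<in> SI n I m"
      and ee: "e = e'((i,j) := k - m)" unfolding Aq_def by auto
    have e'M: "e' \<in> MI n I" and e'D: "Dg n e' = m" using e' by (auto simp: SI_def)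
    have z: "\<And>j. e' (i,j) = 0" using MI_rowzero[OF e'M assms] .
    have sup: "\<And>p. e' p \<noteq> 0 \<Longrightarrow> fst p \<in> I \<and> fst p < snd p \<and> snd p \<le> n"
      using e'M unfolding MI_def by blast
    have "\<And>p. e p \<noteq> 0 \<Longrightarrow> fst p \<in> insert i I \<and> fst p < snd p \<and> snd p \<le> n"
    proof -
      fix p assume "e p \<noteq> 0"
      show "fst p \<in> insert i I \<and> fst p < snd p \<and> snd p \<le> n"
      proof (cases "p = (i,j)")
        case True then show ?thesis using jm by auto
      next
        case False then have "e' p \<noteq> 0" using \<open>e p \<noteq> 0\<close> ee by auto
        then show ?thesis using sup by blast
      qed
    qed
    moreover have "\<And>a j1 j2. j1 \<noteq> j2 \<Longrightarrow> e (a,j1) \<noteq> 0 \<Longrightarrow> e (a,j2) \<noteq> 0 \<Longrightarrow> False"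
    proof -
      fix a j1 j2 assume d: "j1 \<noteq> j2" and n1: "e (a,j1) \<noteq> 0" and n2: "e (a,j2) \<noteq> 0"
      show False
      proof (cases "a = i")
        case True
        then have "(a,j1) \<noteq> (i,j) \<or> (a,j2) \<noteq> (i,j)" using d by auto
        then show False using n1 n2 ee z True by auto
      next
        case False
        then have "e' (a,j1) \<noteq> 0" "e' (a,j2) \<noteq> 0" using n1 n2 ee by auto
        then show False using e'M d unfolding MI_def by blast
      qed
    qed
    ultimately have "e \<in> MI n (insert i I)" unfolding MI_def by blast
    moreover have "(i,j) \<in> Bx n" using jm unfolding Bx_def by auto
    then have "Dg n e = k" using Dg_upd[of "(i,j)" n e' "k - m"] z e'D jm ee by simp
    ultimately show ?thesis by (simp add: SI_def)
  qed
qed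

lemma Aq_val: "e \<in> Aq n I k i q \<Longrightarrow> i \<notin> I \<Longrightarrow>
   e (i, fst q) = k - snd q \<and> (\<forall>j. j \<noteq> fst q \<longrightarrow> e (i,j) = 0)"
proof -
  assume e: "e \<in> Aq n I k i q" and iI: "i \<notin> I"
  then obtain e' where e': "e' \<in> SI n I (snd q)" and ee: "e = e'((i, fst q) := k - snd q)"
    unfolding Aq_def by blast
  have "e' \<in> MI n I" using e' by (simp add: SI_def)
  then have "\<And>j. e' (i,j) = 0" using MI_rowzero iI by blast
  then show ?thesis using ee by simp
qed

lemma card_Aq: assumes "i \<notin> I" shows "card (Aq n I k i q) = CI n I (snd q)"
proof -
  have "inj_on (\<lambda>e. e((i, fst q) := k - snd q)) (SI n I (snd q))"
  proof (rule inj_onI)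
    fix x y assume x: "x \<in> SI n I (snd q)" and y: "y \<in> SI n I (snd q)"
      and xy: "x((i, fst q) := k - snd q) = y((i, fst q) := k - snd q)"
    have "x (i, fst q) = 0" "y (i, fst q) = 0"
      using x y MI_rowzero assms by (auto simp: SI_def)
    then show "x = y" using xy by (metis fun_upd_triv fun_upd_upd)
  qed
  then show ?thesis unfolding Aq_def CI_def by (rule card_image)
qed

lemma CI_insert:
  assumes "i \<notin> I"
  shows "CI n (insert i I) k = CI n I k + (n - i) * (\<Sum>m<k. CI n I m)"
proof -
  let ?Q = "{i<..n} \<times> {..<k}"
  have fQ: "finite ?Q" by simp
  have fA: "\<And>q. finite (Aq n I k i q)" unfolding Aq_def by (intro finite_imageI finite_SI)
  have disj: "\<forall>q\<in>?Q. \<forall>q'\<in>?Q. q \<noteq> q' \<longrightarrow> Aq n I k i q \<inter> Aq n I k i q' = {}"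
  proof (intro ballI impI)
    fix q q' assume q: "q \<in> ?Q" and q': "q' \<in> ?Q" and ne: "q \<noteq> q'"
    show "Aq n I k i q \<inter> Aq n I k i q' = {}"
    proof (rule ccontr)
      assume "Aq n I k i q \<inter> Aq n I k i q' \<noteq> {}"
      then obtain e where e1: "e \<in> Aq n I k i q" and e2: "e \<in> Aq n I k i q'" by blast
      note v1 = Aq_val[OF e1 assms] and v2 = Aq_val[OF e2 assms]
      have sq: "snd q < k" "snd q' < k" using q q' by auto
      show False
      proof (cases "fst q = fst q'")
        case True
        then have "k - snd q = k - snd q'" using v1 v2 by simp
        then have "snd q = snd q'" using sq by simp
        then show False using True ne by (simp add: prod_eq_iff)
      next
        case False
        then have "e (i, fst q) = 0" using v2 by blast
        then show False using v1 sq by simp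
      qed
    qed
  qed
  have disj2: "SI n I k \<inter> (\<Union>q \<in> ?Q. Aq n I k i q) = {}"
  proof (rule ccontr)
    assume "SI n I k \<inter> (\<Union>q \<in> ?Q. Aq n I k i q) \<noteq> {}"
    then obtain e q where e: "e \<in> SI n I k" and q: "q \<in> ?Q" and eq: "e \<in> Aq n I k i q" by blast
    have "e (i, fst q) = 0" using e MI_rowzero assms by (auto simp: SI_def)
    moreover have "e (i, fst q) = k - snd q" using Aq_val[OF eq assms] by blast
    moreover have "snd q < k" using q by auto
    ultimately show False by simp
  qed
  have "CI n (insert i I) k = card (SI n I k) + card (\<Union>q \<in> ?Q. Aq n I k i q)"
    unfolding CI_def SI_insert[OF assms]
    by (rule card_Un_disjoint) (use finite_SI fQ fA disj2 in auto)
  also have "card (\<Union>q \<in> ?Q. Aq n I k i q) = (\<Sum>q\<in>?Q. card (Aq n I k i q))"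
    by (rule card_UN_disjoint[OF fQ]) (use fA disj in auto)
  also have "\<dots> = (\<Sum>q\<in>?Q. CI n I (snd q))" using card_Aq[OF assms] by simp
  also have "\<dots> = (\<Sum>j\<in>{i<..n}. \<Sum>m<k. CI n I m)"
    by (subst sum.cartesian_product) (simp add: case_prod_beta)
  also have "\<dots> = (n - i) * (\<Sum>m<k. CI n I m)" by simp
  finally show ?thesis by (simp add: CI_def)
qed

lemma partial_fps:
  fixes c :: "nat \<Rightarrow> int"
  shows "Abs_fps (\<lambda>k. \<Sum>m<k. c m) * (1 - fps_X) = fps_X * Abs_fps c"
proof (rule fps_ext)
  fix k
  have "Abs_fps (\<lambda>k. \<Sum>m<k. c m) * (1 - fps_X) = Abs_fps (\<lambda>k. \<Sum>m<k. c m) - fps_X * Abs_fps (\<lambda>k. \<Sum>m<k. c m)"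
    by (simp add: algebra_simps)
  then show "fps_nth (Abs_fps (\<lambda>k. \<Sum>m<k. c m) * (1 - fps_X)) k = fps_nth (fps_X * Abs_fps c) k"
    by (cases k) simp_all
qed

lemma CI_empty: "CI n {} k = (if k = 0 then 1 else 0)"
proof -
  have M: "MI n {} = {\<lambda>_. 0}"
  proof (rule set_eqI, rule iffI)
    fix e assume "e \<in> MI n {}"
    then have "\<And>p. e p = 0" unfolding MI_def by blast
    then show "e \<in> {\<lambda>_. 0}" by auto
  qed (auto simp: MI_def)
  have "Dg n (\<lambda>_. 0) = 0" by (simp add: Dg_def)
  moreover have "{e. e = (\<lambda>_::nat\<times>nat. 0::nat) \<and> Dg n e = k} = (if k = 0 then {\<lambda>_. 0} else {})"
    using \<open>Dg n (\<lambda>_. 0) = 0\<close> by auto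
  ultimately show ?thesis unfolding CI_def SI_def M by simp
qed

lemma CI_fps_insert:
  assumes "i \<notin> I"
  shows "Abs_fps (\<lambda>k. int (CI n (insert i I) k)) =
    Abs_fps (\<lambda>k. int (CI n I k)) + fps_const (int (n - i)) * Abs_fps (\<lambda>k. \<Sum>m<k. int (CI n I m))"
  by (rule fps_ext) (simp add: CI_insert[OF assms] of_nat_sum)

lemma CI_fps_main:
  assumes "finite I" "I \<subseteq> {..<n}"
  shows "Abs_fps (\<lambda>k. int (CI n I k)) * (1 - fps_X) ^ card I
     = (\<Prod>i\<in>I. 1 + of_nat (n - i - 1) * fps_X :: int fps)"
  using assms
proof (induction I rule: finite_induct)
  case empty
  have "Abs_fps (\<lambda>k. int (CI n {} k)) = 1" by (rule fps_ext) (simp add: CI_empty)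
  then show ?case by simp
next
  case (insert i I)
  let ?F = "Abs_fps (\<lambda>k. int (CI n I k))"
  let ?P = "Abs_fps (\<lambda>k. \<Sum>m<k. int (CI n I m))"
  have IH: "?F * (1 - fps_X) ^ card I = (\<Prod>i\<in>I. 1 + of_nat (n - i - 1) * fps_X :: int fps)"
    using insert by auto
  have inn: "i < n" using insert by auto
  have c: "fps_const (int (n - i)) = (of_nat (n - i - 1) + 1 :: int fps)"
  proof -
    have "int (n - i) = int (n - i - 1) + 1" using inn by simp
    then have "fps_const (int (n - i)) = fps_const (int (n - i - 1)) + (fps_const 1 :: int fps)"
      by (simp only: fps_const_add)
    then show ?thesis by (simp only: fps_const_1_eq_1 fps_of_nat)
  qed
  have "Abs_fps (\<lambda>k. int (CI n (insert i I) k)) * (1 - fps_X) ^ card (insert i I)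
     = (?F + fps_const (int (n - i)) * ?P) * (1 - fps_X) * (1 - fps_X) ^ card I"
    using insert CI_fps_insert[OF insert(2)] by (simp add: mult.assoc)
  also have "(?F + fps_const (int (n - i)) * ?P) * (1 - fps_X) = ?F * (1 - fps_X) + fps_const (int (n - i)) * (?P * (1 - fps_X))"
    by (simp add: algebra_simps)
  also have "\<dots> = ?F * (1 - fps_X) + fps_const (int (n - i)) * (fps_X * ?F)"
    by (simp add: partial_fps)
  also have "\<dots> = (1 + of_nat (n - i - 1) * fps_X) * ?F"
    unfolding c by (simp add: algebra_simps)
  finally show ?case using insert IH by (simp add: mult.assoc)
qed

lemma mono_iff:
  "(e \<in> monomials n \<and> forkless n e) \<longleftrightarrow> e \<in> MI n {1..<n}"
proof
  assume a: "e \<in> monomials n \<and> forkless n e"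
  have sup: "\<And>p. e p \<noteq> 0 \<Longrightarrow> fst p \<in> {1..<n} \<and> fst p < snd p \<and> snd p \<le> n"
  proof -
    fix p assume ep: "e p \<noteq> 0"
    have mon0: "\<forall>q. q \<notin> var_index n \<longrightarrow> e q = 0" using a unfolding monomials_def by (simp only: mem_Collect_eq) (rule conjunct1)
    note mon = mon0[rule_format]
    have "p \<in> var_index n"
    proof (rule ccontr)
      assume "p \<notin> var_index n" then show False using mon ep by simp
    qed
    moreover obtain a b where p: "p = (a,b)" by (cases p)
    ultimately have "1 \<le> a" "a < b" "b \<le> n" by (simp_all add: var_index_def)
    then show "fst p \<in> {1..<n} \<and> fst p < snd p \<and> snd p \<le> n" using p by simp
  qed
  have row: "\<And>i j k. j \<noteq> k \<Longrightarrow> e (i,j) \<noteq> 0 \<Longrightarrow> e (i,k) \<noteq> 0 \<Longrightarrow> False"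
  proof -
    fix i j k assume d: "j \<noteq> k" and nj: "e (i,j) \<noteq> 0" and nk: "e (i,k) \<noteq> 0"
    have fk: "\<And>j k. j < k \<Longrightarrow> e (i,j) \<noteq> 0 \<Longrightarrow> e (i,k) \<noteq> 0 \<Longrightarrow> False"
    proof -
      fix j k assume jk: "j < k" and nj: "e (i,j) \<noteq> 0" and nk: "e (i,k) \<noteq> 0"
      have "1 \<le> i" "i < j" using sup[OF nj] by auto
      moreover have "k \<le> n" using sup[OF nk] by auto
      moreover have "1 \<le> e (i,j)" "1 \<le> e (i,k)" using nj nk by auto
      ultimately have "\<exists>i j k. 1 \<le> i \<and> i < j \<and> j < k \<and> k \<le> n \<and> 1 \<le> e (i, j) \<and> 1 \<le> e (i, k)"
        using jk by blast
      then show False using a unfolding forkless_def by blast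
    qed
    show False
    proof (cases "j < k")
      case True then show ?thesis using fk nj nk by blast
    next
      case False then have "k < j" using d by simp
      then show ?thesis using fk nj nk by blast
    qed
  qed
  show "e \<in> MI n {1..<n}" unfolding MI_def using sup row by blast
next
  assume m: "e \<in> MI n {1..<n}"
  have sup: "\<And>p. e p \<noteq> 0 \<Longrightarrow> fst p \<in> {1..<n} \<and> fst p < snd p \<and> snd p \<le> n"
    using m unfolding MI_def by blast
  have row: "\<And>i j k. j \<noteq> k \<Longrightarrow> e (i,j) \<noteq> 0 \<Longrightarrow> e (i,k) \<noteq> 0 \<Longrightarrow> False"
    using m unfolding MI_def by blast
  have "e \<in> monomials n"
    unfolding monomials_def
  proof (rule CollectI, rule allI, rule impI, rule ccontr)
    fix p assume "p \<notin> var_index n" "e p \<noteq> 0"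
    then show False using sup[of p] unfolding var_index_def by (cases p) auto
  qed
  moreover have "forkless n e"
    unfolding forkless_def
  proof
    assume "\<exists>i j k. 1 \<le> i \<and> i < j \<and> j < k \<and> k \<le> n \<and> 1 \<le> e (i, j) \<and> 1 \<le> e (i, k)"
    then obtain i j k where "j < k" "1 \<le> e (i, j)" "1 \<le> e (i, k)" by blast
    then show False using row[of j k i] by simp
  qed
  ultimately show "e \<in> monomials n \<and> forkless n e" by blast
qed

lemma tdeg_eq: "e \<in> monomials n \<Longrightarrow> total_degree n e = Dg n e"
  unfolding total_degree_def Dg_def
proof (rule sum.mono_neutral_left)
  show "finite (Bx n)" by (rule finite_Bx)
  show "var_index n \<subseteq> Bx n" unfolding var_index_def Bx_def by auto
  show "\<forall>i\<in>Bx n - var_index n. e i = 0" if "e \<in> monomials n"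
  proof
    fix i assume "i \<in> Bx n - var_index n"
    then have ni: "i \<notin> var_index n" by simp
    have m: "\<forall>q. q \<notin> var_index n \<longrightarrow> e q = 0" using that unfolding monomials_def by (simp only: mem_Collect_eq)
    show "e i = 0" using m[rule_format, OF ni] .
  qed
qed

lemma f_count_CI: "f_count n k = CI n {1..<n} k"
proof -
  have "{e \<in> monomials n. forkless n e \<and> total_degree n e = k} = SI n {1..<n} k"
  proof (rule set_eqI)
    fix e
    show "e \<in> {e \<in> monomials n. forkless n e \<and> total_degree n e = k} \<longleftrightarrow> e \<in> SI n {1..<n} k"
    proof (cases "e \<in> monomials n \<and> forkless n e")
      case True
      then have "e \<in> MI n {1..<n}" using mono_iff by blast
      moreover have "total_degree n e = Dg n e" using True tdeg_eq by blast
      ultimately show ?thesis using True unfolding SI_def by simp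
    next
      case False
      then have "e \<notin> MI n {1..<n}" using mono_iff by blast
      then show ?thesis using False unfolding SI_def by blast
    qed
  qed
  then show ?thesis unfolding f_count_def CI_def by simp
qed

theorem proposition4p13:
  fixes n :: nat
  assumes "n \<ge> 1"
  shows "Abs_fps (\<lambda>k. int (f_count n k)) * (1 - fps_X) ^ (n - 1)
           = (\<Prod>i<n - 1. 1 + of_nat i * fps_X :: int fps)"
proof -
  have "Abs_fps (\<lambda>k. int (f_count n k)) * (1 - fps_X) ^ (n - 1)
      = Abs_fps (\<lambda>k. int (CI n {1..<n} k)) * (1 - fps_X) ^ card {1..<n}"
    by (simp add: f_count_CI)
  also have "\<dots> = (\<Prod>i\<in>{1..<n}. 1 + of_nat (n - i - 1) * fps_X :: int fps)"
    by (rule CI_fps_main) auto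
  also have "\<dots> = (\<Prod>i<n - 1. 1 + of_nat i * fps_X :: int fps)"
    by (rule prod.reindex_bij_witness[where i = "\<lambda>b. n - 1 - b" and j = "\<lambda>a. n - 1 - a"]) auto
  finally show ?thesis .
qed

end
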